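(* Let $\mathcal{C}$ be a nonempty class of scoring rules, each of the form \[g(x,q)=\begin{cases}\int_x^q (v-x)\,d\lambda(v) & \text{if } x\le q,\\ \int_q^x (x-v)\,d\lambda(v) & \text{if } x>q,\end{cases}\] where $\lambda$ is a measure on $\mathbb{R}$ that is mutually absolutely continuous with Lebesgue measure and finite on every bounded interval (the measure $\lambda$ may differ between members of $\mathcal{C}$). Let $\{(X_i,B_i):i\in I\}$ be a collection of pairs, each consisting of a random variable $X_i$ and a nonempty event $B_i$, with conditional previsions (forecasts) $p_i=P(X_i\mid B_i)\in\mathbb{R}\cup\{\pm\infty\}$. Then the collection $\{p_i:i\in I\}$ is coherent$_1$ if and only if it is coherent$_3$ with respect to $\mathcal{C}$.
   Context: Let $\Omega$ be a nonempty set of states $\omega$; events are subsets of $\Omega$ and random variables are real-valued functions on $\Omega$. An event $B$ is identified with its indicator function, so $B(\omega)=1$ if $\omega\in B$ and $0$ otherwise. A conditional prevision $P(X\mid B)$ is an extended real number. Coherence$_1$: a collection $\{P(X_i\mid B_i):i\in I\}$ is coherent$_1$ if for every finite $\{i_1,\dots,i_n\}\subseteq I$, all real $\alpha_1,\dots,\alpha_n$ with $\alpha_j\ge 0$ whenever $P(X_{i_j}\mid B_{i_j})=+\infty$ and $\alpha_j\le 0$ whenever $P(X_{i_j}\mid B_{i_j})=-\infty$, and all real $c_1,\dots,c_n$ with $c_j=P(X_{i_j}\mid B_{i_j})$ whenever that prevision is finite, we have $\sup_\omega \sum_{j=1}^n \alpha_j B_{i_j}(\omega)[X_{i_j}(\omega)-c_j]\ge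 0$. Coherence$_3$ (with respect to a class $\mathcal{C}$ of scoring rules): forecasts $\{p_i:i\in I\}$ for the pairs $(X_i,B_i)$ are coherent$_3$ if for every finite $\{i_1,\dots,i_n\}\subseteq I$, every $g_1,\dots,g_n\in\mathcal{C}$, every set of real alternative forecasts $q_1,\dots,q_n$, and every choice of reals $c_1,\dots,c_n$ with $c_j=p_{i_j}$ when $p_{i_j}$ is finite and $c_j$ finite and lying between $q_j$ and $p_{i_j}$ when $p_{i_j}$ is infinite, we have \[\inf_\omega \sum_{j=1}^n B_{i_j}(\omega)\big[g_j(X_{i_j}(\omega),c_j)-g_j(X_{i_j}(\omega),q_j)\big]\le 0.\] *)

theory Defs
  imports "HOL-Analysis.Analysis"
begin

definition admissible_measure :: "real measure \<Rightarrow> bool" where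
  "admissible_measure lam \<longleftrightarrow>
     sets lam = sets borel \<and>
     absolutely_continuous lborel lam \<and> absolutely_continuous lam lborel \<and>
     (\<forall>a b. emeasure lam {a..b} < \<infinity>)"

definition score :: "real measure \<Rightarrow> real \<Rightarrow> real \<Rightarrow> real" where
  "score lam x q =
     (if x \<le> q then (LINT v:{x..q}|lam. v - x) else (LINT v:{q..x}|lam. x - v))"

definition coherent1 :: "('i \<Rightarrow> 'w \<Rightarrow> real) \<Rightarrow> ('i \<Rightarrow> 'w set) \<Rightarrow> ('i \<Rightarrow> ereal) \<Rightarrow> bool" where
  "coherent1 X B P \<longleftrightarrow>
     (\<forall>J :: 'i set. \<forall>\<alpha> c :: 'i \<Rightarrow> real. finite J \<longrightarrow>
        (\<forall>j\<in>J. P j = \<infinity> \<longrightarrow> \<alpha> j \<ge> 0) \<longrightarrow>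
        (\<forall>j\<in>J. P j = -\<infinity> \<longrightarrow> \<alpha> j \<le> 0) \<longrightarrow>
        (\<forall>j\<in>J. \<bar>P j\<bar> \<noteq> \<infinity> \<longrightarrow> ereal (c j) = P j) \<longrightarrow>
        (SUP \<omega>. ereal (\<Sum>j\<in>J. \<alpha> j * indicator (B j) \<omega> * (X j \<omega> - c j))) \<ge> 0)"

definition coherent3 :: "(real \<Rightarrow> real \<Rightarrow> real) set \<Rightarrow> ('i \<Rightarrow> 'w \<Rightarrow> real) \<Rightarrow> ('i \<Rightarrow> 'w set) \<Rightarrow> ('i \<Rightarrow> ereal) \<Rightarrow> bool" where
  "coherent3 C X B P \<longleftrightarrow>
     (\<forall>J :: 'i set. \<forall>g :: 'i \<Rightarrow> real \<Rightarrow> real \<Rightarrow> real. \<forall>q c :: 'i \<Rightarrow> real. finite J \<longrightarrow>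
        (\<forall>j\<in>J. g j \<in> C) \<longrightarrow>
        (\<forall>j\<in>J. \<bar>P j\<bar> \<noteq> \<infinity> \<longrightarrow> ereal (c j) = P j) \<longrightarrow>
        (\<forall>j\<in>J. P j = \<infinity> \<longrightarrow> q j \<le> c j) \<longrightarrow>
        (\<forall>j\<in>J. P j = -\<infinity> \<longrightarrow> c j \<le> q j) \<longrightarrow>
        (INF \<omega>. ereal (\<Sum>j\<in>J. indicator (B j) \<omega> *
            (g j (X j \<omega>) (c j) - g j (X j \<omega>) (q j)))) \<le> 0)"

end

theory Submission imports Defs "HOL-Probability.Distribution_Functions" begin

lemma adm_sets: "admissible_measure lam \<Longrightarrow> sets lam = sets borel"
  by (simp add: admissible_measure_def)

lemma adm_sets_in[measurable]: "admissible_measure lam \<Longrightarrow> A \<in> sets borel \<Longrightarrow> A \<in> sets lam"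
  by (simp add: admissible_measure_def)

lemma adm_null: "admissible_measure lam \<Longrightarrow> A \<in> null_sets lborel \<Longrightarrow> A \<in> null_sets lam"
  by (auto simp: admissible_measure_def absolutely_continuous_def)

lemma adm_finite_null: "admissible_measure lam \<Longrightarrow> finite S \<Longrightarrow> S \<in> null_sets lam"
  by (rule adm_null) (auto intro: finite_imp_null_set_lborel)

lemma adm_point: "admissible_measure lam \<Longrightarrow> measure lam {x} = 0"
  using adm_finite_null[of lam "{x}"] by (simp add: null_sets_def measure_def)

lemma adm_fin: "admissible_measure lam \<Longrightarrow> emeasure lam {a..b} < \<infinity>"
  by (simp add: admissible_measure_def)

lemma adm_pos: assumes "admissible_measure lam" "a < b" shows "measure lam {a..b} > 0"
proof (rule ccontr)
  assume "\<not> measure lam {a..b} > 0"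
  hence "measure lam {a..b} = 0" using measure_nonneg[of lam "{a..b}"] by linarith
  hence "emeasure lam {a..b} = 0" using adm_fin[OF assms(1), of a b]
      emeasure_eq_ennreal_measure[of lam "{a..b}"] by simp
  hence "{a..b} \<in> null_sets lam" using assms(1) by (simp add: null_sets_def)
  hence "{a..b} \<in> null_sets lborel" using assms(1) by (auto simp: admissible_measure_def absolutely_continuous_def)
  thus False using assms(2) by (auto simp: null_sets_def)
qed

definition sig :: "real \<Rightarrow> real \<Rightarrow> real \<Rightarrow> real" where
  "sig a b v = indicator {a..b} v - indicator {b..a} v"

lemma int_ind: assumes "admissible_measure lam"
  shows "integrable lam (\<lambda>v. indicator {a..b} v * (v - x))"
proof -
  have "integrable lam (\<lambda>v. indicator {a..b} v *\<^sub>R (v - x))"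
    apply (rule integrableI_bounded_set_indicator[where B="\<bar>a-x\<bar>+\<bar>b-x\<bar>"])
    using assms adm_fin[OF assms] by (auto simp: measurable_cong_sets[OF adm_sets[OF assms] refl])
  thus ?thesis by simp
qed

lemma int_ind1: assumes "admissible_measure lam"
  shows "integrable lam (\<lambda>v. indicator {a..b} v :: real)"
  using assms adm_fin[OF assms] by (intro integrable_real_indicator) auto

lemma int_sig: assumes "admissible_measure lam"
  shows "integrable lam (\<lambda>v. sig a b v * (v - x))" "integrable lam (sig a b)"
  using int_ind[OF assms] int_ind1[OF assms] unfolding sig_def left_diff_distrib
  by (auto intro!: Bochner_Integration.integrable_diff)

lemma score_sig: "score lam x q = (LINT v|lam. sig x q v * (v - x))"
  unfolding score_def set_lebesgue_integral_def sig_def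
  by (auto intro!: Bochner_Integration.integral_cong simp: indicator_def algebra_simps
      simp flip: Bochner_Integration.integral_minus)

lemma sig_add: "v \<notin> {x,q,c} \<Longrightarrow> sig x c v - sig x q v = sig q c v"
  unfolding sig_def indicator_def by auto

lemma adm_space: "admissible_measure lam \<Longrightarrow> space lam = UNIV"
  using sets_eq_imp_space_eq[OF adm_sets] by simp

lemma key: assumes adm: "admissible_measure lam"
  shows "score lam x c - score lam x q
     = (LINT v|lam. sig q c v) * (c - x) + (LINT v|lam. sig q c v * (v - c))"
proof -
  note I = int_sig[OF adm]
  have "score lam x c - score lam x q = (LINT v|lam. sig x c v * (v - x) - sig x q v * (v - x))"
    unfolding score_sig using I by (simp add: Bochner_Integration.integral_diff)
  also have "\<dots> = (LINT v|lam. sig q c v * (v - x))"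
  proof (rule integral_cong_AE)
    show "(\<lambda>v. sig x c v * (v - x) - sig x q v * (v - x)) \<in> borel_measurable lam"
      using I by (auto intro!: borel_measurable_integrable)
    show "(\<lambda>v. sig q c v * (v - x)) \<in> borel_measurable lam"
      using I by (auto intro!: borel_measurable_integrable)
    have "AE v in lam. v \<notin> {x,q,c}"
      using adm_finite_null[OF adm, of "{x,q,c}"] by (intro AE_not_in) auto
    thus "AE v in lam. sig x c v * (v - x) - sig x q v * (v - x) = sig q c v * (v - x)"
      by eventually_elim (metis sig_add left_diff_distrib)
  qed
  also have "\<dots> = (LINT v|lam. sig q c v * (v - c) + (c - x) * sig q c v)"
    by (rule Bochner_Integration.integral_cong) (auto simp: algebra_simps)
  also have "\<dots> = (LINT v|lam. sig q c v * (v - c)) + (c - x) * (LINT v|lam. sig q c v)"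
    using I by (simp add: Bochner_Integration.integral_add)
  finally show ?thesis by (simp add: algebra_simps)
qed

lemma E_nonpos: assumes adm: "admissible_measure lam"
  shows "(LINT v|lam. sig q c v * (v - c)) \<le> 0"
proof -
  have "(LINT v|lam. sig q c v * (v - c)) \<le> (LINT v|lam. 0)"
    apply (rule integral_mono)
    using int_sig[OF adm] apply simp_all
    by (auto simp: sig_def indicator_def)
  thus ?thesis by simp
qed

lemma E_lower: assumes adm: "admissible_measure lam"
  shows "(q - c) * (LINT v|lam. sig q c v) \<le> (LINT v|lam. sig q c v * (v - c))"
proof -
  have "(LINT v|lam. (q - c) * sig q c v) \<le> (LINT v|lam. sig q c v * (v - c))"
    apply (rule integral_mono)
    using int_sig[OF adm] apply simp_all
    by (auto simp: sig_def indicator_def)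
  thus ?thesis by simp
qed

lemma m_nonneg: assumes adm: "admissible_measure lam" and "q \<le> c"
  shows "(LINT v|lam. sig q c v) \<ge> 0"
  apply (rule integral_nonneg_AE)
  using assms(2) by (auto simp: sig_def indicator_def)

lemma m_nonpos: assumes adm: "admissible_measure lam" and "c \<le> q"
  shows "(LINT v|lam. sig q c v) \<le> 0"
proof -
  have "(LINT v|lam. sig q c v) \<le> (LINT v|lam. 0)"
    apply (rule integral_mono)
    using int_sig[OF adm] apply simp_all
    using assms(2) by (auto simp: sig_def indicator_def)
  thus ?thesis by simp
qed

lemma m_lt: assumes adm: "admissible_measure lam" and "q < c"
  shows "(LINT v|lam. sig q c v) = measure lam {q..c}"
proof -
  have "sig q c = indicator {q..c}" using assms(2) by (auto simp: sig_def indicator_def fun_eq_iff)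
  thus ?thesis using adm_space[OF adm] by simp
qed

lemma m_gt: assumes adm: "admissible_measure lam" and "c < q"
  shows "(LINT v|lam. sig q c v) = - measure lam {c..q}"
proof -
  have "sig q c = (\<lambda>v. - indicator {c..q} v)" using assms(2) by (auto simp: sig_def indicator_def fun_eq_iff)
  thus ?thesis using adm_space[OF adm] by simp
qed

lemma m_eq: "(LINT v|lam. sig c c v) = 0"
  by (simp add: sig_def)

lemma cont: assumes adm: "admissible_measure lam"
  shows "continuous_on {a..b} (\<lambda>x. measure lam {a..x})"
proof -
  define M where "M = density lam (indicator {a..b})"
  have S: "{a..b} \<in> sets lam" using adm by simp
  have sM: "sets M = sets borel" unfolding M_def using adm_sets[OF adm] by simp
  have spM: "space M = UNIV" unfolding M_def using adm_space[OF adm] by simp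
  have em: "X \<in> sets borel \<Longrightarrow> measure M X = measure lam ({a..b} \<inter> X)" for X
    unfolding M_def using S adm by (intro measure_restricted) auto
  have "finite_measure M"
  proof
    have "emeasure M (space M) = emeasure lam ({a..b} \<inter> UNIV)"
      unfolding spM unfolding M_def using S sets.top[of lam] by (intro emeasure_restricted) (auto simp: adm_space[OF adm])
    thus "emeasure M (space M) \<noteq> \<infinity>" using adm_fin[OF adm, of a b] by simp
  qed
  then interpret finite_borel_measure M using sM
    by (simp add: finite_borel_measure_def finite_borel_measure_axioms_def)
  have "isCont (cdf M) x" for x
  proof -
    have "measure M {x} = measure lam ({a..b} \<inter> {x})" by (rule em) simp
    also have "\<dots> = 0"
    proof (cases "x \<in> {a..b}")
      case True
      hence "{a..b} \<inter> {x} = {x}" by auto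
      thus ?thesis using adm_point[OF adm] by simp
    next
      case False
      hence "{a..b} \<inter> {x} = {}" by auto
      thus ?thesis by simp
    qed
    finally show ?thesis using isCont_cdf by simp
  qed
  hence c1: "continuous_on {a..b} (cdf M)" by (intro continuous_at_imp_continuous_on) auto
  have c2: "x \<in> {a..b} \<Longrightarrow> cdf M x = measure lam {a..x}" for x
  proof -
    assume "x \<in> {a..b}"
    hence e: "{a..b} \<inter> {..x} = {a..x}" by auto
    have "cdf M x = measure lam ({a..b} \<inter> {..x})" unfolding cdf_def2 by (rule em) simp
    thus ?thesis by (simp only: e)
  qed
  have "continuous_on {a..b} (cdf M) = continuous_on {a..b} (\<lambda>x. measure lam {a..x})"
    by (rule continuous_on_cong) (simp_all add: c2)
  thus ?thesis using c1 by simp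
qed

lemma split_meas: assumes adm: "admissible_measure lam" and "a \<le> x" "x \<le> c"
  shows "measure lam {a..c} = measure lam {a..x} + measure lam {x..c}"
proof -
  have f: "emeasure lam {u..w} \<noteq> \<infinity>" for u w using adm_fin[OF adm, of u w] by simp
  have f2: "emeasure lam {u..<w} \<noteq> \<infinity>" for u w
  proof -
    have "emeasure lam {u..<w} \<le> emeasure lam {u..w}" by (rule emeasure_mono) (auto simp: adm)
    thus ?thesis using f[of u w] by (auto simp: top_unique)
  qed
  have f3: "emeasure lam {w} \<noteq> \<infinity>" for w using f[of w w] by simp
  have "{a..c} = {a..<x} \<union> {x..c}" using assms by auto
  moreover have "measure lam ({a..<x} \<union> {x..c}) = measure lam {a..<x} + measure lam {x..c}"
    by (rule measure_Union) (use f f2 adm in auto)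
  ultimately have 1: "measure lam {a..c} = measure lam {a..<x} + measure lam {x..c}" by simp
  have "{a..x} = {a..<x} \<union> {x}" using assms by auto
  moreover have "measure lam ({a..<x} \<union> {x}) = measure lam {a..<x} + measure lam {x}"
    by (rule measure_Union) (use f3 f2 adm in auto)
  ultimately have "measure lam {a..x} = measure lam {a..<x} + measure lam {x}" by simp
  thus ?thesis using 1 adm_point[OF adm] by simp
qed

lemma ivt_right: assumes adm: "admissible_measure lam" and "c \<le> b" and "0 \<le> y" "y \<le> measure lam {c..b}"
  shows "\<exists>q. c \<le> q \<and> q \<le> b \<and> measure lam {c..q} = y"
proof -
  show ?thesis
  proof (cases "c \<le> b")
    case True
    thus ?thesis using assms adm_point[OF adm, of c]
      by (intro IVT'[where f="\<lambda>x. measure lam {c..x}"] cont) auto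
  next
    case False
    thus ?thesis using assms by auto
  qed
qed

lemma ivt_left: assumes adm: "admissible_measure lam" and "a \<le> c" and "0 \<le> y" "y \<le> measure lam {a..c}"
  shows "\<exists>q. a \<le> q \<and> q \<le> c \<and> measure lam {q..c} = y"
proof -
  show ?thesis
  proof (cases "a \<le> c")
  case False
    thus ?thesis using assms by auto
  next
  case ac: True
  have "\<exists>x. a \<le> x \<and> x \<le> c \<and> measure lam {a..x} = measure lam {a..c} - y"
    using assms ac adm_point[OF adm, of a]
    by (intro IVT'[where f="\<lambda>x. measure lam {a..x}"] cont) auto
  then obtain x where "a \<le> x" "x \<le> c" "measure lam {a..x} = measure lam {a..c} - y" by blast
  thus ?thesis using split_meas[OF adm, of a x c] by (intro exI[of _ x]) auto
  qed
qed

lemma ind01: "(indicator S w :: real) = 0 \<or> indicator S w = 1"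
  by (simp add: indicator_def)

lemma dir1:
  fixes C :: "(real \<Rightarrow> real \<Rightarrow> real) set"
    and X :: "'i \<Rightarrow> 'w \<Rightarrow> real" and B :: "'i \<Rightarrow> 'w set" and P :: "'i \<Rightarrow> ereal"
  assumes C: "\<forall>g\<in>C. \<exists>lam. admissible_measure lam \<and> g = score lam"
    and c1: "coherent1 X B P"
  shows "coherent3 C X B P"
  unfolding coherent3_def
proof (intro allI impI)
  fix J :: "'i set" and g q c
  assume fin: "finite J" and gC: "\<forall>j\<in>J. g j \<in> C"
    and hc: "\<forall>j\<in>J. \<bar>P j\<bar> \<noteq> \<infinity> \<longrightarrow> ereal (c j) = P j"
    and hp: "\<forall>j\<in>J. P j = \<infinity> \<longrightarrow> q j \<le> c j"
    and hm: "\<forall>j\<in>J. P j = -\<infinity> \<longrightarrow> c j \<le> q j"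
  have "\<forall>j\<in>J. \<exists>lam. admissible_measure lam \<and> g j = score lam" using gC C by blast
  then obtain L where L: "\<And>j. j \<in> J \<Longrightarrow> admissible_measure (L j) \<and> g j = score (L j)"
    by metis
  define \<alpha> where "\<alpha> j = (LINT v|L j. sig (q j) (c j) v)" for j
  have a1: "\<forall>j\<in>J. P j = \<infinity> \<longrightarrow> \<alpha> j \<ge> 0" using hp L m_nonneg unfolding \<alpha>_def by blast
  have a2: "\<forall>j\<in>J. P j = -\<infinity> \<longrightarrow> \<alpha> j \<le> 0" using hm L m_nonpos unfolding \<alpha>_def by blast
  have sup: "(SUP \<omega>. ereal (\<Sum>j\<in>J. \<alpha> j * indicator (B j) \<omega> * (X j \<omega> - c j))) \<ge> 0"
    using c1 fin a1 a2 hc unfolding coherent1_def by blast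
  have pw: "(\<Sum>j\<in>J. indicator (B j) \<omega> * (g j (X j \<omega>) (c j) - g j (X j \<omega>) (q j)))
      \<le> - (\<Sum>j\<in>J. \<alpha> j * indicator (B j) \<omega> * (X j \<omega> - c j))" for \<omega>
  proof -
    have "(\<Sum>j\<in>J. indicator (B j) \<omega> * (g j (X j \<omega>) (c j) - g j (X j \<omega>) (q j)))
      \<le> (\<Sum>j\<in>J. - (\<alpha> j * indicator (B j) \<omega> * (X j \<omega> - c j)))"
    proof (rule sum_mono)
      fix j assume j: "j \<in> J"
      have adm: "admissible_measure (L j)" and gj: "g j = score (L j)" using L[OF j] by auto
      have E: "(LINT v|L j. sig (q j) (c j) v * (v - c j)) \<le> 0" by (rule E_nonpos[OF adm])
      have eq: "g j (X j \<omega>) (c j) - g j (X j \<omega>) (q j)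
          = \<alpha> j * (c j - X j \<omega>) + (LINT v|L j. sig (q j) (c j) v * (v - c j))"
        unfolding gj \<alpha>_def by (rule key[OF adm])
      from ind01[of "B j" \<omega>] show "indicator (B j) \<omega> * (g j (X j \<omega>) (c j) - g j (X j \<omega>) (q j))
          \<le> - (\<alpha> j * indicator (B j) \<omega> * (X j \<omega> - c j))"
      proof
        assume "indicator (B j) \<omega> = (0::real)" thus ?thesis by simp
      next
        assume i1: "indicator (B j) \<omega> = (1::real)"
        have "\<alpha> j * (c j - X j \<omega>) = - (\<alpha> j * (X j \<omega> - c j))" by (simp add: algebra_simps)
        thus ?thesis using eq E i1 by simp
      qed
    qed
    thus ?thesis by (simp add: sum_negf)
  qed
  show "(INF \<omega>. ereal (\<Sum>j\<in>J. indicator (B j) \<omega> * (g j (X j \<omega>) (c j) - g j (X j \<omega>) (q j)))) \<le> 0"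
  proof (rule ccontr)
    assume "\<not> ?thesis"
    hence "0 < (INF \<omega>. ereal (\<Sum>j\<in>J. indicator (B j) \<omega> * (g j (X j \<omega>) (c j) - g j (X j \<omega>) (q j))))"
      by simp
    then obtain r where r0: "0 < ereal r"
      and rI: "ereal r < (INF \<omega>. ereal (\<Sum>j\<in>J. indicator (B j) \<omega> * (g j (X j \<omega>) (c j) - g j (X j \<omega>) (q j))))"
      using ereal_dense2 by blast
    have rl: "r < (\<Sum>j\<in>J. indicator (B j) \<omega> * (g j (X j \<omega>) (c j) - g j (X j \<omega>) (q j)))" for \<omega>
    proof -
      have "(INF \<omega>. ereal (\<Sum>j\<in>J. indicator (B j) \<omega> * (g j (X j \<omega>) (c j) - g j (X j \<omega>) (q j))))
        \<le> ereal (\<Sum>j\<in>J. indicator (B j) \<omega> * (g j (X j \<omega>) (c j) - g j (X j \<omega>) (q j)))"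
        by (rule INF_lower) simp
      with rI have "ereal r < ereal (\<Sum>j\<in>J. indicator (B j) \<omega> * (g j (X j \<omega>) (c j) - g j (X j \<omega>) (q j)))"
        by (rule order_less_le_trans)
      thus ?thesis by simp
    qed
    have "(\<Sum>j\<in>J. \<alpha> j * indicator (B j) \<omega> * (X j \<omega> - c j)) \<le> -r" for \<omega>
      using pw[of \<omega>] rl[of \<omega>] by linarith
    hence "(SUP \<omega>. ereal (\<Sum>j\<in>J. \<alpha> j * indicator (B j) \<omega> * (X j \<omega> - c j))) \<le> ereal (-r)"
      by (intro SUP_least) simp
    with sup have "0 \<le> ereal (-r)" by (rule order_trans)
    thus False using r0 by simp
  qed
qed

lemma choose_q:
  assumes adm: "admissible_measure lam" and d: "\<delta> > 0" and t: "t > 0"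
    and bnd: "t * \<bar>a\<bar> \<le> min (measure lam {c - \<delta>..c}) (measure lam {c..c + \<delta>})"
  shows "\<exists>q. \<bar>q - c\<bar> \<le> \<delta> \<and> (LINT v|lam. sig q c v) = t * a \<and> (a \<ge> 0 \<longrightarrow> q \<le> c) \<and> (a \<le> 0 \<longrightarrow> c \<le> q)"
proof (cases "a > 0")
  case True
  have "\<exists>q. c - \<delta> \<le> q \<and> q \<le> c \<and> measure lam {q..c} = t * a"
    using True t bnd d by (intro ivt_left[OF adm]) auto
  then obtain q where q: "c - \<delta> \<le> q" "q \<le> c" "measure lam {q..c} = t * a" by blast
  have "q \<noteq> c" using q(3) adm_point[OF adm, of c] True t by auto
  hence "q < c" using q by auto
  thus ?thesis using q m_lt[OF adm \<open>q < c\<close>] True by (intro exI[of _ q]) auto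
next
  case False
  show ?thesis
  proof (cases "a < 0")
    case True
    have "\<exists>q. c \<le> q \<and> q \<le> c + \<delta> \<and> measure lam {c..q} = - (t * a)"
      using True t bnd d by (intro ivt_right[OF adm]) (auto simp: mult_nonneg_nonpos)
    then obtain q where q: "c \<le> q" "q \<le> c + \<delta>" "measure lam {c..q} = - (t * a)" by blast
    have "q \<noteq> c" using q(3) adm_point[OF adm, of c] True t by (auto simp: mult_pos_neg)
    hence "c < q" using q by auto
    thus ?thesis using q m_gt[OF adm \<open>c < q\<close>] True by (intro exI[of _ q]) auto
  next
    case False
    hence "a = 0" using \<open>\<not> a > 0\<close> by auto
    thus ?thesis using d by (intro exI[of _ c]) (simp add: m_eq)
  qed
qed

lemma dir2:
  fixes C :: "(real \<Rightarrow> real \<Rightarrow> real) set"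
    and X :: "'i \<Rightarrow> 'w \<Rightarrow> real" and B :: "'i \<Rightarrow> 'w set" and P :: "'i \<Rightarrow> ereal"
  assumes Cne: "C \<noteq> {}" and C: "\<forall>g\<in>C. \<exists>lam. admissible_measure lam \<and> g = score lam"
    and c3: "coherent3 C X B P"
  shows "coherent1 X B P"
  unfolding coherent1_def
proof (intro allI impI)
  fix J :: "'i set" and \<alpha> c :: "'i \<Rightarrow> real"
  assume fin: "finite J"
    and a1: "\<forall>j\<in>J. P j = \<infinity> \<longrightarrow> \<alpha> j \<ge> 0"
    and a2: "\<forall>j\<in>J. P j = -\<infinity> \<longrightarrow> \<alpha> j \<le> 0"
    and hc: "\<forall>j\<in>J. \<bar>P j\<bar> \<noteq> \<infinity> \<longrightarrow> ereal (c j) = P j"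
  define F where "F \<omega> = (\<Sum>j\<in>J. \<alpha> j * indicator (B j) \<omega> * (X j \<omega> - c j))" for \<omega>
  show "(SUP \<omega>. ereal (\<Sum>j\<in>J. \<alpha> j * indicator (B j) \<omega> * (X j \<omega> - c j))) \<ge> 0"
  proof (rule ccontr)
    assume "\<not> ?thesis"
    hence "(SUP \<omega>. ereal (F \<omega>)) < 0" unfolding F_def by simp
    then obtain z where z1: "(SUP \<omega>. ereal (F \<omega>)) < ereal z" and z2: "ereal z < 0"
      using ereal_dense2 by blast
    define s where "s = - z"
    have s0: "s > 0" using z2 unfolding s_def by simp
    have Fs: "F \<omega> \<le> - s" for \<omega>
    proof -
      have "ereal (F \<omega>) \<le> (SUP \<omega>. ereal (F \<omega>))" by (rule SUP_upper) simp
      hence "ereal (F \<omega>) < ereal z" using z1 by (rule order_le_less_trans)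
      thus ?thesis unfolding s_def by simp
    qed
    obtain g0 where g0: "g0 \<in> C" using Cne by blast
    then obtain lam where adm: "admissible_measure lam" and g0s: "g0 = score lam" using C by blast
    define A where "A = (\<Sum>j\<in>J. \<bar>\<alpha> j\<bar>)"
    have A0: "A \<ge> 0" unfolding A_def by (simp add: sum_nonneg)
    define \<delta> where "\<delta> = s / (2 * (A + 1))"
    have d0: "\<delta> > 0" unfolding \<delta>_def using s0 A0 by simp
    have dA: "\<delta> * A \<le> s / 2"
    proof -
      have "\<delta> * A \<le> \<delta> * (A + 1)" using d0 by simp
      also have "\<dots> = s / 2" unfolding \<delta>_def using A0 by (simp add: field_simps)
      finally show ?thesis .
    qed
    define \<mu> where "\<mu> j = min (measure lam {c j - \<delta>..c j}) (measure lam {c j..c j + \<delta>})" for j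
    have \<mu>0: "\<mu> j > 0" for j unfolding \<mu>_def using adm_pos[OF adm] d0 by simp
    define t where "t = Min (insert 1 ((\<lambda>j. \<mu> j / (\<bar>\<alpha> j\<bar> + 1)) ` J))"
    have t0: "t > 0" unfolding t_def using fin \<mu>0
      by (subst Min_gr_iff) (auto intro!: divide_pos_pos)
    have tb: "t * \<bar>\<alpha> j\<bar> \<le> \<mu> j" if "j \<in> J" for j
    proof -
      have "t \<le> \<mu> j / (\<bar>\<alpha> j\<bar> + 1)" unfolding t_def using fin that by (intro Min_le) auto
      hence "t * (\<bar>\<alpha> j\<bar> + 1) \<le> \<mu> j" by (simp add: field_simps)
      thus ?thesis using t0 by (simp add: algebra_simps)
    qed
    have "\<forall>j\<in>J. \<exists>q. \<bar>q - c j\<bar> \<le> \<delta> \<and> (LINT v|lam. sig q (c j) v) = t * \<alpha> j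
        \<and> (\<alpha> j \<ge> 0 \<longrightarrow> q \<le> c j) \<and> (\<alpha> j \<le> 0 \<longrightarrow> c j \<le> q)"
      using choose_q[OF adm d0 t0] tb unfolding \<mu>_def by blast
    then obtain q where q: "\<And>j. j \<in> J \<Longrightarrow> \<bar>q j - c j\<bar> \<le> \<delta> \<and> (LINT v|lam. sig (q j) (c j) v) = t * \<alpha> j
        \<and> (\<alpha> j \<ge> 0 \<longrightarrow> q j \<le> c j) \<and> (\<alpha> j \<le> 0 \<longrightarrow> c j \<le> q j)"
      by metis
    have hp: "\<forall>j\<in>J. P j = \<infinity> \<longrightarrow> q j \<le> c j" using q a1 by blast
    have hm: "\<forall>j\<in>J. P j = -\<infinity> \<longrightarrow> c j \<le> q j" using q a2 by blast
    have inf: "(INF \<omega>. ereal (\<Sum>j\<in>J. indicator (B j) \<omega> *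
            ((\<lambda>_. g0) j (X j \<omega>) (c j) - (\<lambda>_. g0) j (X j \<omega>) (q j)))) \<le> 0"
      using c3 unfolding coherent3_def
      apply -
      apply (drule spec[of _ J], drule spec[of _ "\<lambda>_. g0"], drule spec[of _ q], drule spec[of _ c])
      using fin g0 hc hp hm by simp
    have pw: "t * s / 2 \<le> (\<Sum>j\<in>J. indicator (B j) \<omega> * (g0 (X j \<omega>) (c j) - g0 (X j \<omega>) (q j)))" for \<omega>
    proof -
      have "(\<Sum>j\<in>J. - t * (\<alpha> j * indicator (B j) \<omega> * (X j \<omega> - c j)) - \<delta> * t * \<bar>\<alpha> j\<bar>)
          \<le> (\<Sum>j\<in>J. indicator (B j) \<omega> * (g0 (X j \<omega>) (c j) - g0 (X j \<omega>) (q j)))"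
      proof (rule sum_mono)
        fix j assume j: "j \<in> J"
        note qj = q[OF j]
        define E where "E = (LINT v|lam. sig (q j) (c j) v * (v - c j))"
        have eq: "g0 (X j \<omega>) (c j) - g0 (X j \<omega>) (q j) = t * \<alpha> j * (c j - X j \<omega>) + E"
          unfolding g0s E_def using key[OF adm, of "X j \<omega>" "c j" "q j"] qj by simp
        have E1: "E \<le> 0" unfolding E_def by (rule E_nonpos[OF adm])
        have E2: "(q j - c j) * (t * \<alpha> j) \<le> E" unfolding E_def using E_lower[OF adm, of "q j" "c j"] qj by simp
        have "- ((q j - c j) * (t * \<alpha> j)) \<le> \<bar>q j - c j\<bar> * (t * \<bar>\<alpha> j\<bar>)"
        proof -
          have "\<bar>(q j - c j) * (t * \<alpha> j)\<bar> = \<bar>q j - c j\<bar> * (t * \<bar>\<alpha> j\<bar>)"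
            using t0 by (simp add: abs_mult)
          thus ?thesis using abs_ge_minus_self[of "(q j - c j) * (t * \<alpha> j)"] by linarith
        qed
        also have "\<dots> \<le> \<delta> * (t * \<bar>\<alpha> j\<bar>)" using qj t0 by (intro mult_right_mono) auto
        finally have E3: "- (\<delta> * t * \<bar>\<alpha> j\<bar>) \<le> E" using E2 by (simp add: algebra_simps)
        have r: "t * \<alpha> j * (c j - X j \<omega>) = - t * (\<alpha> j * (X j \<omega> - c j))" by (simp add: algebra_simps)
        from ind01[of "B j" \<omega>]
        show "- t * (\<alpha> j * indicator (B j) \<omega> * (X j \<omega> - c j)) - \<delta> * t * \<bar>\<alpha> j\<bar>
          \<le> indicator (B j) \<omega> * (g0 (X j \<omega>) (c j) - g0 (X j \<omega>) (q j))"
        proof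
          assume "indicator (B j) \<omega> = (0::real)" thus ?thesis using d0 t0 by simp
        next
          assume "indicator (B j) \<omega> = (1::real)" thus ?thesis using eq E3 r by simp
        qed
      qed
      moreover have "(\<Sum>j\<in>J. - t * (\<alpha> j * indicator (B j) \<omega> * (X j \<omega> - c j)) - \<delta> * t * \<bar>\<alpha> j\<bar>)
          = - t * F \<omega> - t * (\<delta> * A)"
      proof -
        have 1: "- t * F \<omega> = (\<Sum>j\<in>J. - t * (\<alpha> j * indicator (B j) \<omega> * (X j \<omega> - c j)))"
          unfolding F_def by (rule sum_distrib_left)
        have 2: "(\<delta> * t) * A = (\<Sum>j\<in>J. \<delta> * t * \<bar>\<alpha> j\<bar>)"
          unfolding A_def by (rule sum_distrib_left)
        show ?thesis unfolding sum_subtractf 1 using 2 by (simp add: algebra_simps)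
      qed
      moreover have "- t * F \<omega> \<ge> t * s"
      proof -
        have "t * F \<omega> \<le> t * (- s)" using Fs[of \<omega>] t0 by (intro mult_left_mono) auto
        thus ?thesis by simp
      qed
      moreover have "t * (\<delta> * A) \<le> t * (s / 2)" using dA t0 by simp
      ultimately show ?thesis by linarith
    qed
    have "ereal (t * s / 2) \<le> (INF \<omega>. ereal (\<Sum>j\<in>J. indicator (B j) \<omega> *
            ((\<lambda>_. g0) j (X j \<omega>) (c j) - (\<lambda>_. g0) j (X j \<omega>) (q j))))"
      using pw by (intro INF_greatest) simp
    hence "ereal (t * s / 2) \<le> 0" using inf by (rule order_trans)
    thus False using mult_pos_pos[OF t0 s0] by simp
  qed
qed

theorem theorem4p1:
  fixes C :: "(real \<Rightarrow> real \<Rightarrow> real) set"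
    and X :: "'i \<Rightarrow> 'w \<Rightarrow> real" and B :: "'i \<Rightarrow> 'w set" and P :: "'i \<Rightarrow> ereal"
  assumes "C \<noteq> {}"
    and "\<forall>g\<in>C. \<exists>lam. admissible_measure lam \<and> g = score lam"
    and "\<forall>i. B i \<noteq> {}"
  shows "coherent1 X B P \<longleftrightarrow> coherent3 C X B P"
  using dir1[OF assms(2)] dir2[OF assms(1,2)] by blast

end
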